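(* For a discrete memoryless channel $\mathcal W$ from a finite set $\mathcal X$ to a finite set $\mathcal Y$, $\lim_{r\to0^+}E_{\rm sp}(r,\mathcal W)=U(\mathcal W)$.
   Context: $D(P\|Q)=\sum_xP(x)\log\frac{P(x)}{Q(x)}$ ($0\log(0/q)=0$; $+\infty$ if $P\not\ll Q$); for $\alpha\in(0,1)$, $D_\alpha(P\|Q)=\frac1{\alpha-1}\log\sum_xP(x)^\alpha Q(x)^{1-\alpha}$. For $P_X\in\mathcal P(\mathcal X)$, $P_{XY}(x,y)=P_X(x)\mathcal W(y|x)$. For $r>0$, $E_{\rm sp}(r,\mathcal W)=\sup_{\alpha\in(0,1]}\max_{P_X}\min_{Q_Y}\frac{1-\alpha}{\alpha}\big(D_\alpha(P_{XY}\|P_X\times Q_Y)-r\big)$ (the $\alpha=1$ term being $0$). $U(\mathcal W)=\max_{P_X}\min_{Q_Y}D(P_X\times Q_Y\|P_{XY})$. *)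

theory Defs
  imports Complex_Main "HOL-Library.Extended_Real"
begin

definition is_distr :: "('a::finite \<Rightarrow> real) \<Rightarrow> bool" where
  "is_distr P \<longleftrightarrow> (\<forall>a. 0 \<le> P a) \<and> (\<Sum>a\<in>UNIV. P a) = 1"

text \<open>A DMC: W x y = W(y|x), each row a distribution on the output alphabet.\<close>
definition is_channel :: "('x::finite \<Rightarrow> 'y::finite \<Rightarrow> real) \<Rightarrow> bool" where
  "is_channel W \<longleftrightarrow> (\<forall>x. is_distr (W x))"

definition kl_div :: "('a::finite \<Rightarrow> real) \<Rightarrow> ('a \<Rightarrow> real) \<Rightarrow> ereal" where
  "kl_div P Q =
     (if (\<forall>a. P a \<noteq> 0 \<longrightarrow> Q a \<noteq> 0)
      then ereal (\<Sum>a\<in>UNIV. if P a = 0 then 0 else P a * ln (P a / Q a))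
      else \<infinity>)"

text \<open>Renyi divergence of order alpha in (0,1); log 0 = -infinity gives +infinity.\<close>
definition renyi_div :: "real \<Rightarrow> ('a::finite \<Rightarrow> real) \<Rightarrow> ('a \<Rightarrow> real) \<Rightarrow> ereal" where
  "renyi_div \<alpha> P Q =
     (let s = (\<Sum>a\<in>UNIV. P a powr \<alpha> * Q a powr (1 - \<alpha>))
      in if s = 0 then \<infinity> else ereal (ln s / (\<alpha> - 1)))"

definition joint_distr :: "('x \<Rightarrow> real) \<Rightarrow> ('x \<Rightarrow> 'y \<Rightarrow> real) \<Rightarrow> ('x \<times> 'y \<Rightarrow> real)" where
  "joint_distr P W = (\<lambda>(x, y). P x * W x y)"

definition prod_distr :: "('x \<Rightarrow> real) \<Rightarrow> ('y \<Rightarrow> real) \<Rightarrow> ('x \<times> 'y \<Rightarrow> real)" where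
  "prod_distr P Q = (\<lambda>(x, y). P x * Q y)"

definition E_sp :: "real \<Rightarrow> ('x::finite \<Rightarrow> 'y::finite \<Rightarrow> real) \<Rightarrow> ereal" where
  "E_sp r W =
     (SUP \<alpha>\<in>{0<..1}. SUP P\<in>{P. is_distr P}. INF Q\<in>{Q. is_distr Q}.
        (if \<alpha> = 1 then 0
         else ereal ((1 - \<alpha>) / \<alpha>) *
                (renyi_div \<alpha> (joint_distr P W) (prod_distr P Q) - ereal r)))"

definition U_chan :: "('x::finite \<Rightarrow> 'y::finite \<Rightarrow> real) \<Rightarrow> ereal" where
  "U_chan W =
     (SUP P\<in>{P. is_distr P}. INF Q\<in>{Q. is_distr Q}.
        kl_div (prod_distr P Q) (joint_distr P W))"

end

theory Submission
  imports Defs "HOL-Analysis.Analysis"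
begin

lemma young':
  fixes q b a :: real
  assumes "0 \<le> q" "0 \<le> b" "0 < a" "a < 1"
  shows "q powr (1-a) * b powr a \<le> (1-a)*q + a*b"
proof (cases "q = 0 \<or> b = 0")
  case True then show ?thesis using assms by auto
next
  case False
  then show ?thesis using Youngs_inequality_0[of "1-a" a q b] assms by auto
qed

lemma sum_pair: "(\<Sum>z\<in>(UNIV::('a::finite\<times>'b::finite) set). f z) = (\<Sum>x\<in>UNIV. \<Sum>y\<in>UNIV. f (x,y))"
  by (simp add: sum.cartesian_product flip: UNIV_Times_UNIV)

definition Aa :: "('x::finite \<Rightarrow> real) \<Rightarrow> ('x \<Rightarrow> 'y \<Rightarrow> real) \<Rightarrow> real \<Rightarrow> 'y \<Rightarrow> real" where
  "Aa P W a y = (\<Sum>x\<in>UNIV. P x * W x y powr a)"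
definition Ss :: "('x::finite \<Rightarrow> real) \<Rightarrow> ('x \<Rightarrow> 'y::finite \<Rightarrow> real) \<Rightarrow> real \<Rightarrow> real" where
  "Ss P W a = (\<Sum>y\<in>UNIV. Aa P W a y powr (1/a))"
definition ss :: "real \<Rightarrow> ('x::finite \<Rightarrow> real) \<Rightarrow> ('x \<Rightarrow> 'y::finite \<Rightarrow> real) \<Rightarrow> ('y \<Rightarrow> real) \<Rightarrow> real" where
  "ss a P W Q = (\<Sum>z\<in>UNIV. joint_distr P W z powr a * prod_distr P Q z powr (1-a))"

lemma distr_nonneg: "is_distr P \<Longrightarrow> 0 \<le> P x" by (simp add: is_distr_def)
lemma chan_nonneg: "is_channel W \<Longrightarrow> 0 \<le> W x y" by (simp add: is_channel_def is_distr_def)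

lemma ss_eq:
  assumes P: "is_distr P" and Q: "is_distr Q" and W: "is_channel W" and a: "0 < a" "a < 1"
  shows "ss a P W Q = (\<Sum>y\<in>UNIV. Q y powr (1-a) * Aa P W a y)"
proof -
  have "ss a P W Q = (\<Sum>x\<in>UNIV. \<Sum>y\<in>UNIV. (P x * W x y) powr a * (P x * Q y) powr (1-a))"
    unfolding ss_def by (simp add: sum_pair joint_distr_def prod_distr_def)
  also have "\<dots> = (\<Sum>x\<in>UNIV. \<Sum>y\<in>UNIV. Q y powr (1-a) * (P x * W x y powr a))"
  proof (intro sum.cong refl)
    fix x y
    have p: "0 \<le> P x" "0 \<le> Q y" "0 \<le> W x y" using P Q W by (auto simp: distr_nonneg chan_nonneg)
    show "(P x * W x y) powr a * (P x * Q y) powr (1-a) = Q y powr (1-a) * (P x * W x y powr a)"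
    proof (cases "P x = 0")
      case True then show ?thesis by simp
    next
      case False
      have "P x powr a * P x powr (1-a) = P x" using False p by (simp add: powr_add[symmetric])
      then show ?thesis using p by (simp add: powr_mult algebra_simps)
    qed
  qed
  also have "\<dots> = (\<Sum>y\<in>UNIV. Q y powr (1-a) * Aa P W a y)"
    by (subst sum.swap) (simp add: Aa_def sum_distrib_left)
  finally show ?thesis .
qed

lemma Aa_nonneg: "is_distr P \<Longrightarrow> is_channel W \<Longrightarrow> 0 \<le> Aa P W a y"
  unfolding Aa_def by (intro sum_nonneg mult_nonneg_nonneg) (auto simp: distr_nonneg)

lemma Ss_nonneg: "0 \<le> Ss P W a"
  unfolding Ss_def by (intro sum_nonneg) auto

lemma ss_le:
  assumes P: "is_distr P" and Q: "is_distr Q" and W: "is_channel W" and a: "0 < a" "a < 1"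
  shows "ss a P W Q \<le> Ss P W a powr a"
proof (cases "Ss P W a = 0")
  case True
  have "\<forall>y\<in>UNIV. Aa P W a y powr (1/a) = 0"
    using True unfolding Ss_def by (subst (asm) sum_nonneg_eq_0_iff) auto
  then have "\<And>y. Aa P W a y = 0" by simp
  then show ?thesis using ss_eq[OF assms] True by simp
next
  case False
  define S where "S = Ss P W a"
  have Sp: "S > 0" using False Ss_nonneg[of P W a] unfolding S_def by linarith
  define B where "B y = Aa P W a y powr (1/a) / S" for y
  have B0: "0 \<le> B y" for y unfolding B_def using Sp by simp
  have Bs: "(\<Sum>y\<in>UNIV. B y) = 1" unfolding B_def S_def
    using Sp unfolding S_def by (simp add: sum_divide_distrib[symmetric] Ss_def)
  have A: "Aa P W a y = S powr a * B y powr a" for y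
  proof -
    have "Aa P W a y = (Aa P W a y powr (1/a)) powr a"
      using a Aa_nonneg[OF P W] by (simp add: powr_powr)
    also have "\<dots> = (S * B y) powr a" unfolding B_def using Sp by simp
    also have "\<dots> = S powr a * B y powr a" using Sp B0 by (simp add: powr_mult)
    finally show ?thesis .
  qed
  have "ss a P W Q = (\<Sum>y\<in>UNIV. S powr a * (Q y powr (1-a) * B y powr a))"
    using ss_eq[OF assms] A by (simp add: algebra_simps)
  also have "\<dots> \<le> (\<Sum>y\<in>UNIV. S powr a * ((1-a) * Q y + a * B y))"
    by (intro sum_mono mult_left_mono young') (use a B0 Q in \<open>auto simp: distr_nonneg\<close>)
  also have "\<dots> = S powr a * ((1-a) * (\<Sum>y\<in>UNIV. Q y) + a * (\<Sum>y\<in>UNIV. B y))"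
    by (simp add: sum_distrib_left[symmetric] sum.distrib)
  also have "\<dots> = S powr a" using Q Bs by (simp add: is_distr_def)
  finally show ?thesis unfolding S_def .
qed

lemma joint_sum: "is_distr P \<Longrightarrow> is_channel W \<Longrightarrow> (\<Sum>z\<in>UNIV. joint_distr P W z) = 1"
  by (simp add: sum_pair joint_distr_def sum_distrib_left[symmetric] is_channel_def is_distr_def)
lemma prod_sum: "is_distr P \<Longrightarrow> is_distr Q \<Longrightarrow> (\<Sum>z\<in>UNIV. prod_distr P Q z) = 1"
  by (simp add: sum_pair prod_distr_def sum_distrib_left[symmetric] is_distr_def)
lemma joint_nonneg: "is_distr P \<Longrightarrow> is_channel W \<Longrightarrow> 0 \<le> joint_distr P W z"
  by (cases z) (simp add: joint_distr_def distr_nonneg chan_nonneg)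
lemma prod_nonneg: "is_distr P \<Longrightarrow> is_distr Q \<Longrightarrow> 0 \<le> prod_distr P Q z"
  by (cases z) (simp add: prod_distr_def distr_nonneg)

lemma gibbs:
  fixes a b :: "'z::finite \<Rightarrow> real"
  assumes a0: "\<And>z. 0 \<le> a z" and b0: "\<And>z. 0 \<le> b z" and sa: "(\<Sum>z\<in>UNIV. a z) = 1"
    and sb: "(\<Sum>z\<in>UNIV. b z) = 1" and ac: "\<And>z. b z \<noteq> 0 \<Longrightarrow> a z \<noteq> 0"
  shows "0 \<le> (\<Sum>z\<in>UNIV. if b z = 0 then 0 else b z * ln (b z / a z))"
proof -
  have "(\<Sum>z\<in>UNIV. if b z = 0 then 0 else b z * ln (a z / b z))
      \<le> (\<Sum>z\<in>UNIV. if b z = 0 then 0 else b z * (a z / b z - 1))"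
  proof (intro sum_mono)
    fix z
    show "(if b z = 0 then 0 else b z * ln (a z / b z)) \<le> (if b z = 0 then 0 else b z * (a z / b z - 1))"
    proof (cases "b z = 0")
      case False
      then have "0 < b z" "0 < a z" using a0[of z] b0[of z] ac[of z] by auto
      then show ?thesis using False by (auto intro!: mult_left_mono ln_le_minus_one)
    qed simp
  qed
  also have "\<dots> = (\<Sum>z\<in>UNIV. (if b z = 0 then 0 else a z) - b z)"
    by (intro sum.cong) (auto simp: field_simps)
  also have "\<dots> \<le> (\<Sum>z\<in>UNIV. a z - b z)"
    by (intro sum_mono) (use a0 in auto)
  also have "\<dots> = 0" using sa sb by (simp add: sum_subtractf)
  finally have "(\<Sum>z\<in>UNIV. if b z = 0 then 0 else b z * ln (a z / b z)) \<le> 0" .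
  moreover have "(\<Sum>z\<in>UNIV. if b z = 0 then 0 else b z * ln (b z / a z))
      = - (\<Sum>z\<in>UNIV. if b z = 0 then 0 else b z * ln (a z / b z))"
  proof -
    have "\<And>z. b z \<noteq> 0 \<Longrightarrow> ln (b z / a z) = - ln (a z / b z)"
      using a0 b0 ac by (metis ln_div ln_inverse inverse_divide less_eq_real_def divide_pos_pos)
    then show ?thesis by (auto simp flip: sum_negf intro!: sum.cong)
  qed
  ultimately show ?thesis by linarith
qed

lemma jensen_s:
  fixes a b :: "'z::finite \<Rightarrow> real"
  assumes a0: "\<And>z. 0 \<le> a z" and b0: "\<And>z. 0 \<le> b z"
    and sb: "(\<Sum>z\<in>UNIV. b z) = 1" and ac: "\<And>z. b z \<noteq> 0 \<Longrightarrow> a z \<noteq> 0"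
    and al: "0 < al" "al < 1"
  shows "exp (- al * (\<Sum>z\<in>UNIV. if b z = 0 then 0 else b z * ln (b z / a z)))
          \<le> (\<Sum>z\<in>UNIV. a z powr al * b z powr (1 - al))"
proof -
  define y where "y z = al * ln (a z / b z)" for z
  define m where "m = (\<Sum>z\<in>UNIV. b z * y z)"
  have lnr: "\<And>z. b z \<noteq> 0 \<Longrightarrow> ln (b z / a z) = - ln (a z / b z)"
    using a0 b0 ac by (metis ln_div ln_inverse inverse_divide less_eq_real_def divide_pos_pos)
  have mD: "- al * (\<Sum>z\<in>UNIV. if b z = 0 then 0 else b z * ln (b z / a z)) = m"
    unfolding m_def y_def by (auto simp: sum_distrib_left lnr intro!: sum.cong)
  have tmq: "a z powr al * b z powr (1 - al) = (b z * exp (y z))" for z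
  proof (cases "b z = 0")
    case False
    then have p: "0 < b z" "0 < a z" using a0[of z] b0[of z] ac[of z] by auto
    have "b z * exp (y z) = b z * (a z / b z) powr al" unfolding y_def using p by (simp add: powr_def)
    also have "\<dots> = a z powr al * b z powr (1 - al)" using p
      by (simp add: powr_divide powr_diff field_simps)
    finally show ?thesis using False by simp
  qed simp
  have "exp m = exp m * (\<Sum>z\<in>UNIV. b z * (1 + (y z - m)))"
  proof -
    have "(\<Sum>z\<in>UNIV. b z * (1 + (y z - m)))
       = (\<Sum>z\<in>UNIV. b z) + m - m * (\<Sum>z\<in>UNIV. b z)"
    proof -
      have e: "(\<Sum>z\<in>UNIV. b z * m) = m * (\<Sum>z\<in>UNIV. b z)" by (simp add: sum_distrib_left mult.commute)
      have "(\<Sum>z\<in>UNIV. b z * (1 + (y z - m))) = (\<Sum>z\<in>UNIV. b z + b z * y z - b z * m)"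
        by (simp add: algebra_simps)
      also have "\<dots> = (\<Sum>z\<in>UNIV. b z) + m - m * (\<Sum>z\<in>UNIV. b z)"
        by (simp only: sum_subtractf sum.distrib e) (simp add: m_def)
      finally show ?thesis .
    qed
    then show ?thesis using sb by simp
  qed
  also have "\<dots> = (\<Sum>z\<in>UNIV. b z * (exp m * (1 + (y z - m))))"
    by (simp add: sum_distrib_left algebra_simps)
  also have "\<dots> \<le> (\<Sum>z\<in>UNIV. b z * exp (y z))"
  proof (intro sum_mono)
    fix z
    have "exp m * (1 + (y z - m)) \<le> exp m * exp (y z - m)"
      by (intro mult_left_mono exp_ge_add_one_self) auto
    also have "\<dots> = exp (y z)" by (simp add: exp_diff)
    finally show "(b z * (exp m * (1 + (y z - m)))) \<le> (b z * exp (y z))"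
      using b0[of z] by (auto intro: mult_left_mono)
  qed
  also have "\<dots> = (\<Sum>z\<in>UNIV. a z powr al * b z powr (1 - al))" by (simp add: tmq)
  finally show ?thesis using mD by simp
qed

definition tm :: "('x::finite \<Rightarrow> 'y::finite \<Rightarrow> real) \<Rightarrow> real \<Rightarrow> real \<Rightarrow> ('x \<Rightarrow> real) \<Rightarrow> ('y \<Rightarrow> real) \<Rightarrow> ereal" where
  "tm W r al P Q = (if al = 1 then 0
         else ereal ((1 - al) / al) *
                (renyi_div al (joint_distr P W) (prod_distr P Q) - ereal r))"

lemma E_sp_tm: "E_sp r W = (SUP al\<in>{0<..1}. SUP P\<in>{P. is_distr P}. INF Q\<in>{Q. is_distr Q}. tm W r al P Q)"
  unfolding E_sp_def tm_def by simp

lemma ss_nonneg: "is_distr P \<Longrightarrow> is_distr Q \<Longrightarrow> is_channel W \<Longrightarrow> 0 \<le> ss al P W Q"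
  unfolding ss_def by (intro sum_nonneg mult_nonneg_nonneg) auto

lemma renyi_ss: "renyi_div al (joint_distr P W) (prod_distr P Q) =
   (if ss al P W Q = 0 then \<infinity> else ereal (ln (ss al P W Q) / (al - 1)))"
  unfolding renyi_div_def ss_def Let_def by simp

lemma tm_le_kl:
  assumes P: "is_distr P" and Q: "is_distr Q" and W: "is_channel W" and al: "0 < al" "al \<le> 1" and r: "0 \<le> r"
  shows "tm W r al P Q \<le> kl_div (prod_distr P Q) (joint_distr P W)"
proof (cases "\<forall>z. prod_distr P Q z \<noteq> 0 \<longrightarrow> joint_distr P W z \<noteq> 0")
  case False
  then have "kl_div (prod_distr P Q) (joint_distr P W) = \<infinity>" unfolding kl_div_def by meson
  then show ?thesis by simp
next
  case True
  define D where "D = (\<Sum>z\<in>UNIV. if prod_distr P Q z = 0 then 0 else prod_distr P Q z * ln (prod_distr P Q z / joint_distr P W z))"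
  have kl: "kl_div (prod_distr P Q) (joint_distr P W) = ereal D"
    using True unfolding kl_div_def D_def by simp
  have D0: "0 \<le> D" unfolding D_def
    by (rule gibbs) (use True P Q W in \<open>auto simp: joint_nonneg prod_nonneg joint_sum prod_sum\<close>)
  show ?thesis
  proof (cases "al = 1")
    case True then show ?thesis using kl D0 by (simp add: tm_def)
  next
    case False
    then have al1: "al < 1" using al by simp
    have js: "exp (- al * D) \<le> ss al P W Q" unfolding D_def ss_def
      by (rule jensen_s) (use True P Q W al1 al in \<open>auto simp: joint_nonneg prod_nonneg joint_sum prod_sum\<close>)
    have sp: "0 < ss al P W Q" using js by (smt (verit) exp_gt_zero)
    have lns: "- al * D \<le> ln (ss al P W Q)" using js sp by (metis exp_le_cancel_iff exp_ln)
    have "tm W r al P Q = ereal ((1 - al) / al * (ln (ss al P W Q) / (al - 1) - r))"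
      using False sp by (simp add: tm_def renyi_ss)
    also have "(1 - al) / al * (ln (ss al P W Q) / (al - 1) - r) = - ln (ss al P W Q) / al - r * (1 - al) / al"
      using al al1 by (simp add: field_simps)
    also have "\<dots> \<le> D"
    proof -
      have "- ln (ss al P W Q) / al \<le> D" using lns al by (simp add: field_simps)
      moreover have "0 \<le> r * (1 - al) / al" using r al al1 by simp
      ultimately show ?thesis by linarith
    qed
    finally show ?thesis using kl by simp
  qed
qed

lemma tm_ge:
  assumes P: "is_distr P" and Q: "is_distr Q" and W: "is_channel W" and al: "0 < al" "al < 1"
    and S: "0 < Ss P W al"
  shows "ereal (- ln (Ss P W al) - r * (1 - al) / al) \<le> tm W r al P Q"
proof (cases "ss al P W Q = 0")
  case True
  then show ?thesis using al by (simp add: tm_def renyi_ss)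
next
  case False
  then have sp: "0 < ss al P W Q" using ss_nonneg[OF P Q W, of al] by linarith
  have "ln (ss al P W Q) \<le> ln (Ss P W al powr al)"
    by (rule ln_le_cancel_iff[THEN iffD2]) (use ss_le[OF P Q W al] sp S in auto)
  also have "\<dots> = al * ln (Ss P W al)" using S by (simp add: ln_powr)
  finally have l: "ln (ss al P W Q) \<le> al * ln (Ss P W al)" .
  have "tm W r al P Q = ereal ((1 - al) / al * (ln (ss al P W Q) / (al - 1) - r))"
    using False al by (simp add: tm_def renyi_ss)
  also have "(1 - al) / al * (ln (ss al P W Q) / (al - 1) - r) = - ln (ss al P W Q) / al - r * (1 - al) / al"
    using al by (simp add: field_simps)
  finally have e: "tm W r al P Q = ereal (- ln (ss al P W Q) / al - r * (1 - al) / al)" .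
  have "- ln (Ss P W al) \<le> - ln (ss al P W Q) / al" using l al by (simp add: field_simps)
  then show ?thesis unfolding e by simp
qed

lemma tm_inf:
  assumes P: "is_distr P" and Q: "is_distr Q" and W: "is_channel W" and al: "0 < al" "al < 1"
    and S: "Ss P W al = 0"
  shows "tm W r al P Q = \<infinity>"
proof -
  have "ss al P W Q = 0" using ss_le[OF P Q W al] ss_nonneg[OF P Q W, of al] S by simp
  then show ?thesis using al by (simp add: tm_def renyi_ss)
qed

definition Gg :: "('x::finite \<Rightarrow> real) \<Rightarrow> ('x \<Rightarrow> 'y \<Rightarrow> real) \<Rightarrow> 'y \<Rightarrow> real" where
  "Gg P W y = (if \<forall>x. 0 < P x \<longrightarrow> 0 < W x y then exp (\<Sum>x\<in>UNIV. P x * ln (W x y)) else 0)"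

lemma ev_pos: "\<forall>\<^sub>F a in at_right (0::real). 0 < a"
  by (simp add: eventually_at_right_field) (auto intro: exI[of _ 1])

lemma Aa_lim1:
  assumes P: "is_distr P" and W: "is_channel W" and c: "\<forall>x. 0 < P x \<longrightarrow> 0 < W x y"
  shows "((\<lambda>a. Aa P W a y powr (1/a)) \<longlongrightarrow> Gg P W y) (at_right 0)"
proof -
  define h where "h a = (\<Sum>x\<in>UNIV. P x * exp (a * ln (W x y)))" for a
  define L where "L = (\<Sum>x\<in>UNIV. P x * ln (W x y))"
  have Ah: "Aa P W a y = h a" for a unfolding Aa_def h_def
  proof (intro sum.cong refl)
    fix x show "P x * W x y powr a = P x * exp (a * ln (W x y))"
      using c distr_nonneg[OF P, of x] by (cases "P x = 0") (auto simp: powr_def less_le)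
  qed
  have h0: "h 0 = 1" using P by (simp add: h_def is_distr_def)
  obtain x0 where x0: "0 < P x0"
  proof -
    have "\<not> (\<forall>x. P x \<le> 0)"
    proof
      assume "\<forall>x. P x \<le> 0"
      then have "(\<Sum>x\<in>UNIV. P x) \<le> 0" by (simp add: sum_nonpos)
      then show False using P by (simp add: is_distr_def)
    qed
    then show ?thesis using that by (meson not_le)
  qed
  have hpos: "0 < h a" for a unfolding h_def
    by (rule sum_pos2[of _ x0]) (use x0 distr_nonneg[OF P] in auto)
  have dh: "(h has_field_derivative L) (at 0)"
  proof -
    have "(h has_field_derivative (\<Sum>x\<in>UNIV. P x * (exp (0 * ln (W x y)) * ln (W x y)))) (at 0)"
      unfolding h_def by (intro derivative_eq_intros) auto
    then show ?thesis by (simp add: L_def)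
  qed
  have dlh: "((\<lambda>a. ln (h a)) has_field_derivative L) (at 0)"
  proof -
    have "((\<lambda>a. ln (h a)) has_field_derivative (1 / h 0 * L)) (at 0)"
      by (rule DERIV_chain2[OF DERIV_ln_divide dh]) (use hpos in auto)
    then show ?thesis using h0 by simp
  qed
  then have "((\<lambda>a. (ln (h a) - ln (h 0)) / (a - 0)) \<longlongrightarrow> L) (at 0)"
    by (simp add: has_field_derivative_iff)
  then have "((\<lambda>a. ln (h a) / a) \<longlongrightarrow> L) (at_right 0)"
    using h0 by (auto intro: tendsto_mono[OF at_within_le_at])
  then have "((\<lambda>a. exp (ln (h a) / a)) \<longlongrightarrow> exp L) (at_right 0)"
    by (intro tendsto_intros)
  moreover have "\<forall>\<^sub>F a in at_right 0. exp (ln (h a) / a) = Aa P W a y powr (1/a)"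
  proof -
    have hne: "h a \<noteq> 0" for a using hpos[of a] by simp
    show ?thesis using ev_pos by eventually_elim (simp add: Ah powr_def hne)
  qed
  ultimately have "((\<lambda>a. Aa P W a y powr (1/a)) \<longlongrightarrow> exp L) (at_right 0)"
    by (rule Lim_transform_eventually)
  then show ?thesis using c by (simp add: Gg_def L_def)
qed

lemma Aa_lim2:
  assumes P: "is_distr P" and W: "is_channel W" and x0: "0 < P x0" "W x0 y = 0"
  shows "((\<lambda>a. Aa P W a y powr (1/a)) \<longlongrightarrow> Gg P W y) (at_right 0)"
proof -
  have G: "Gg P W y = 0" using x0 by (auto simp: Gg_def)
  define f where "f a = (\<Sum>x\<in>UNIV. P x * (if W x y = 0 then 0 else exp (a * ln (W x y))))" for a
  have Af: "Aa P W a y = f a" for a unfolding Aa_def f_def by (simp add: powr_def)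
  have fc: "isCont f 0"
  proof -
    have c: "isCont (\<lambda>a. if W x y = 0 then 0 else exp (a * ln (W x y))) 0" for x
      by (cases "W x y = 0") (auto intro!: continuous_intros)
    show ?thesis unfolding f_def by (intro continuous_intros c)
  qed
  have f0: "f 0 \<le> 1 - P x0"
  proof -
    have "f 0 \<le> (\<Sum>x\<in>UNIV. P x - (if x = x0 then P x0 else 0))"
      unfolding f_def by (intro sum_mono) (use x0 distr_nonneg[OF P] in auto)
    also have "\<dots> = 1 - P x0" using P by (simp add: sum_subtractf is_distr_def)
    finally show ?thesis .
  qed
  have fnn: "0 \<le> f a" for a unfolding f_def
    by (intro sum_nonneg mult_nonneg_nonneg) (auto simp: distr_nonneg[OF P])
  define q where "q = (1 + f 0) / 2"
  have q: "f 0 < q" "q < 1" "0 < q" using f0 x0 fnn[of 0] by (auto simp: q_def)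
  have "\<forall>\<^sub>F a in at 0. f a < q"
    using fc q(1) unfolding isCont_def by (rule order_tendstoD)
  then have ev: "\<forall>\<^sub>F a in at_right 0. f a < q"
    by (rule filter_leD[OF at_within_le_at, rotated])
  have lq: "((\<lambda>a. q powr (1/a)) \<longlongrightarrow> 0) (at_right 0)"
  proof -
    have "filterlim (\<lambda>a. ln q * inverse a) at_bot (at_right 0)"
      by (rule filterlim_tendsto_neg_mult_at_bot[OF tendsto_const _ filterlim_inverse_at_top_right])
         (use q in simp)
    then have "((\<lambda>a. exp (ln q * inverse a)) \<longlongrightarrow> 0) (at_right 0)"
      by (rule filterlim_compose[OF exp_at_bot])
    moreover have "\<forall>\<^sub>F a in at_right 0. exp (ln q * inverse a) = q powr (1/a)"
      using q by (simp add: powr_def divide_inverse mult.commute)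
    ultimately show ?thesis by (rule Lim_transform_eventually)
  qed
  have "((\<lambda>a. Aa P W a y powr (1/a)) \<longlongrightarrow> 0) (at_right 0)"
  proof (rule tendsto_sandwich[OF _ _ tendsto_const lq])
    show "\<forall>\<^sub>F a in at_right 0. 0 \<le> Aa P W a y powr (1/a)" by simp
    show "\<forall>\<^sub>F a in at_right 0. Aa P W a y powr (1/a) \<le> q powr (1/a)"
      using ev ev_pos by eventually_elim (auto simp: Af intro!: powr_mono2 fnn)
  qed
  then show ?thesis using G by simp
qed

lemma Aa_lim:
  assumes P: "is_distr P" and W: "is_channel W"
  shows "((\<lambda>a. Aa P W a y powr (1/a)) \<longlongrightarrow> Gg P W y) (at_right 0)"
proof (cases "\<forall>x. 0 < P x \<longrightarrow> 0 < W x y")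
  case True then show ?thesis using Aa_lim1[OF P W] by blast
next
  case False
  then obtain x0 where "0 < P x0" "\<not> 0 < W x0 y" by blast
  then show ?thesis using Aa_lim2[OF P W, of x0 y] chan_nonneg[OF W, of x0 y] by simp
qed

lemma Ss_lim:
  assumes P: "is_distr P" and W: "is_channel W"
  shows "((\<lambda>a. Ss P W a) \<longlongrightarrow> (\<Sum>y\<in>UNIV. Gg P W y)) (at_right 0)"
  unfolding Ss_def by (intro tendsto_sum Aa_lim[OF P W])

lemma prod_app[simp]: "prod_distr P Q (x,y) = P x * Q y" by (simp add: prod_distr_def)
lemma joint_app[simp]: "joint_distr P W (x,y) = P x * W x y" by (simp add: joint_distr_def)

lemma Gg_nonneg: "0 \<le> Gg P W y" by (simp add: Gg_def)

lemma Qstar: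
  assumes P: "is_distr P" and W: "is_channel W" and T: "0 < (\<Sum>y\<in>UNIV. Gg P W y)"
  shows "\<exists>Q. is_distr Q \<and> kl_div (prod_distr P Q) (joint_distr P W) = ereal (- ln (\<Sum>y\<in>UNIV. Gg P W y))"
proof -
  define T where "T = (\<Sum>y\<in>UNIV. Gg P W y)"
  define Q where "Q y = Gg P W y / T" for y
  have Tp: "0 < T" using T by (simp add: T_def)
  have Qd: "is_distr Q" unfolding is_distr_def Q_def using Tp
    by (auto simp: Gg_nonneg sum_divide_distrib[symmetric] T_def)
  have Qc: "Q y \<noteq> 0 \<Longrightarrow> (\<forall>x. 0 < P x \<longrightarrow> 0 < W x y)" for y
    unfolding Q_def Gg_def by (auto split: if_splits)
  have ac: "\<forall>z. prod_distr P Q z \<noteq> 0 \<longrightarrow> joint_distr P W z \<noteq> 0"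
  proof (intro allI impI)
    fix z assume "prod_distr P Q z \<noteq> 0"
    then obtain x y where z: "z = (x,y)" "P x \<noteq> 0" "Q y \<noteq> 0" by (cases z) (auto simp: prod_distr_def)
    then have "0 < P x" using distr_nonneg[OF P, of x] by simp
    then have "0 < W x y" using Qc[OF z(3)] by blast
    then show "joint_distr P W z \<noteq> 0" using z by (simp add: joint_distr_def)
  qed
  have inner: "(\<Sum>x\<in>UNIV. if P x * Q y = 0 then 0 else P x * Q y * ln (P x * Q y / (P x * W x y)))
        = Q y * (- ln T)" for y
  proof (cases "Q y = 0")
    case True then show ?thesis by simp
  next
    case False
    have c: "\<forall>x. 0 < P x \<longrightarrow> 0 < W x y" using Qc[OF False] .
    have Qy: "0 < Q y" using False Qd distr_nonneg by (metis less_eq_real_def)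
    have lnG: "ln (Gg P W y) = (\<Sum>x\<in>UNIV. P x * ln (W x y))" using c by (simp add: Gg_def)
    have lnQ: "ln (Q y) = ln (Gg P W y) - ln T"
    proof -
      have Gp: "0 < Gg P W y" using Qy Tp unfolding Q_def by (auto simp: zero_less_divide_iff)
      show ?thesis unfolding Q_def using Gp Tp by (simp add: ln_div)
    qed
    have "(\<Sum>x\<in>UNIV. if P x * Q y = 0 then 0 else P x * Q y * ln (P x * Q y / (P x * W x y)))
        = (\<Sum>x\<in>UNIV. Q y * (P x * ln (Q y) - P x * ln (W x y)))"
    proof (intro sum.cong refl)
      fix x
      show "(if P x * Q y = 0 then 0 else P x * Q y * ln (P x * Q y / (P x * W x y))) = Q y * (P x * ln (Q y) - P x * ln (W x y))"
      proof (cases "P x = 0")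
        case False
        then have px: "0 < P x" using distr_nonneg[OF P, of x] by simp
        then have w: "0 < W x y" using c by blast
        have "ln (Q y / W x y) = ln (Q y) - ln (W x y)"
          using px w Qy by (simp add: ln_div)
        then show ?thesis using px Qy by (simp add: distrib_left[symmetric] right_diff_distrib)
      qed simp
    qed
    also have "\<dots> = Q y * (ln (Q y) * (\<Sum>x\<in>UNIV. P x) - (\<Sum>x\<in>UNIV. P x * ln (W x y)))"
      by (simp add: sum_distrib_left[symmetric] sum_subtractf sum_distrib_right mult.commute)
    also have "\<dots> = Q y * (- ln T)" using P lnQ lnG by (simp add: is_distr_def)
    finally show ?thesis .
  qed
  have "kl_div (prod_distr P Q) (joint_distr P W) =
     ereal (\<Sum>z\<in>UNIV. if prod_distr P Q z = 0 then 0 else prod_distr P Q z * ln (prod_distr P Q z / joint_distr P W z))"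
    using ac by (simp add: kl_div_def)
  also have "(\<Sum>z\<in>UNIV. if prod_distr P Q z = 0 then 0 else prod_distr P Q z * ln (prod_distr P Q z / joint_distr P W z))
     = (\<Sum>y\<in>UNIV. \<Sum>x\<in>UNIV. if P x * Q y = 0 then 0 else P x * Q y * ln (P x * Q y / (P x * W x y)))"
    unfolding sum_pair by (subst sum.swap) (simp only: prod_app joint_app)
  also have "\<dots> = (\<Sum>y\<in>UNIV. Q y) * (- ln T)" by (simp only: inner sum_distrib_right)
  also have "\<dots> = - ln T" using Qd by (simp add: is_distr_def)
  finally show ?thesis using Qd unfolding T_def by blast
qed

lemma distr_ex: "\<exists>P::'a::finite \<Rightarrow> real. is_distr P"
proof -
  have "is_distr (\<lambda>_::'a. 1 / real CARD('a))" unfolding is_distr_def by simp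
  then show ?thesis by blast
qed

lemma E_upper:
  fixes W :: "'x::finite \<Rightarrow> 'y::finite \<Rightarrow> real"
  assumes W: "is_channel W" and r: "0 \<le> r"
  shows "E_sp r W \<le> U_chan W"
  unfolding E_sp_tm U_chan_def
proof (intro SUP_least)
  fix al and P :: "'x \<Rightarrow> real" assume al: "al \<in> {0<..1::real}" and P: "P \<in> {P. is_distr P}"
  have "(INF Q\<in>{Q. is_distr Q}. tm W r al P Q) \<le> (INF Q\<in>{Q. is_distr Q}. kl_div (prod_distr P Q) (joint_distr P W))"
  proof (intro INF_mono)
    fix m :: "'y \<Rightarrow> real" assume m: "m \<in> {Q. is_distr Q}"
    then show "\<exists>Q\<in>{Q. is_distr Q}. tm W r al P Q \<le> kl_div (prod_distr P m) (joint_distr P W)"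
      using tm_le_kl[of P m W al r] W al P r by auto
  qed
  also have "\<dots> \<le> (SUP P\<in>{P. is_distr P}. INF Q\<in>{Q. is_distr Q}. kl_div (prod_distr P Q) (joint_distr P W))"
    using P by (intro SUP_upper)
  finally show "(INF Q\<in>{Q. is_distr Q}. tm W r al P Q) \<le> (SUP P\<in>{P. is_distr P}. INF Q\<in>{Q. is_distr Q}. kl_div (prod_distr P Q) (joint_distr P W))" .
qed

lemma E_ge_INF:
  fixes W :: "'x::finite \<Rightarrow> 'y::finite \<Rightarrow> real"
  assumes "0 < al" "al \<le> 1" "is_distr P"
  shows "(INF Q\<in>{Q. is_distr Q}. tm W r al P Q) \<le> E_sp r W"
  unfolding E_sp_tm
  by (rule SUP_upper2[of al], use assms in simp, rule SUP_upper2[of P], use assms in auto)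

lemma E_nonneg:
  fixes W :: "'x::finite \<Rightarrow> 'y::finite \<Rightarrow> real"
  shows "0 \<le> E_sp r W"
proof -
  obtain P :: "'x \<Rightarrow> real" where P: "is_distr P" using distr_ex by blast
  obtain Q :: "'y \<Rightarrow> real" where Q: "is_distr Q" using distr_ex by blast
  have "(INF Q\<in>{Q. is_distr Q}. tm W r 1 P Q) = 0"
    using Q by (subst INF_const[symmetric, of "{Q. is_distr Q}" 0]) (auto simp: tm_def)
  then show ?thesis using E_ge_INF[of 1 P W r] P by simp
qed

lemma E_lower:
  fixes W :: "'x::finite \<Rightarrow> 'y::finite \<Rightarrow> real"
  assumes W: "is_channel W" and c: "c < U_chan W"
  shows "\<forall>\<^sub>F r in at_right 0. c < E_sp r W"
proof (cases "c < 0")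
  case True
  then show ?thesis using E_nonneg[of r W for r] by (auto intro: always_eventually less_le_trans)
next
  case False
  then obtain c0 where c0: "c = ereal c0" using c by (cases c) auto
  obtain P where P: "is_distr P" and cP: "c < (INF Q\<in>{Q. is_distr Q}. kl_div (prod_distr P Q) (joint_distr P W))"
    using c unfolding U_chan_def by (auto simp: less_SUP_iff)
  define T where "T = (\<Sum>y\<in>UNIV. Gg P W y)"
  have T0: "0 \<le> T" unfolding T_def by (intro sum_nonneg Gg_nonneg)
  obtain e where e: "T < e" "c0 < - ln e" "0 < e"
  proof (cases "T = 0")
    case True
    show ?thesis by (rule that[of "exp (-(c0+1))"]) (use True in auto)
  next
    case False
    then have Tp: "0 < T" using T0 by simp
    obtain Q where Q: "is_distr Q" "kl_div (prod_distr P Q) (joint_distr P W) = ereal (- ln T)"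
      using Qstar[OF P W] Tp unfolding T_def by blast
    have "c < ereal (- ln T)" using cP Q by (metis INF_lower less_le_trans mem_Collect_eq)
    then have lt: "c0 < - ln T" using c0 by simp
    define m where "m = (c0 + - ln T) / 2"
    show ?thesis
    proof (rule that[of "exp (- m)"])
      have "ln T < - m" using lt unfolding m_def by (simp add: field_simps)
      then show "T < exp (- m)" using Tp by (metis exp_less_mono exp_ln)
      show "c0 < - ln (exp (- m))" using lt unfolding m_def by simp
    qed simp
  qed
  have "\<forall>\<^sub>F a in at_right 0. Ss P W a < e"
    using Ss_lim[OF P W] e(1) unfolding T_def by (rule order_tendstoD)
  then obtain b where b: "0 < b" "\<And>y. 0 < y \<Longrightarrow> y < b \<Longrightarrow> Ss P W y < e"
    by (auto simp: eventually_at_right_field)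
  define a0 where "a0 = min b 1 / 2"
  have a0: "0 < a0" "a0 < 1" "a0 < b" using b by (auto simp: a0_def)
  have Sa: "Ss P W a0 < e" using b a0 by auto
  show ?thesis
  proof (cases "Ss P W a0 = 0")
    case True
    have "\<forall>r. c < E_sp r W"
    proof
      fix r
      have "\<infinity> \<le> (INF Q\<in>{Q. is_distr Q}. tm W r a0 P Q)"
        by (rule INF_greatest) (use tm_inf[OF P _ W a0(1,2) True] in auto)
      then have "(INF Q\<in>{Q. is_distr Q}. tm W r a0 P Q) = \<infinity>" by simp
      then have "E_sp r W = \<infinity>" using E_ge_INF[of a0 P W r] a0 P by simp
      then show "c < E_sp r W" using c0 by simp
    qed
    then show ?thesis by simp
  next
    case False
    then have Sp: "0 < Ss P W a0" using Ss_nonneg[of P W a0] by simp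
    have "- ln e < - ln (Ss P W a0)" using Sp Sa by simp
    then have d: "0 < - ln (Ss P W a0) - c0" using e by simp
    define del where "del = (- ln (Ss P W a0) - c0) * a0 / (1 - a0)"
    have del: "0 < del" using d a0 by (simp add: del_def)
    have "\<forall>\<^sub>F r in at_right 0. r < del"
      using del by (auto simp: eventually_at_right_field intro!: exI[of _ del])
    then show ?thesis
    proof eventually_elim
      case (elim r)
      have "r * (1 - a0) / a0 < - ln (Ss P W a0) - c0"
        using elim a0 unfolding del_def by (simp add: field_simps)
      then have "c < ereal (- ln (Ss P W a0) - r * (1 - a0) / a0)" using c0 by simp
      also have "\<dots> \<le> (INF Q\<in>{Q. is_distr Q}. tm W r a0 P Q)"
        by (intro INF_greatest tm_ge[OF P _ W a0(1,2) Sp]) auto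
      also have "\<dots> \<le> E_sp r W" using E_ge_INF[of a0 P W r] a0 P by simp
      finally show ?case .
    qed
  qed
qed

theorem mainTheorem5:
  fixes W :: "'x::finite \<Rightarrow> 'y::finite \<Rightarrow> real"
  assumes "is_channel W"
  shows "((\<lambda>r. E_sp r W) \<longlongrightarrow> U_chan W) (at_right 0)"
proof (rule order_tendstoI)
  fix c assume "c < U_chan W"
  then show "\<forall>\<^sub>F r in at_right 0. c < E_sp r W" using E_lower assms by blast
next
  fix c assume c: "U_chan W < c"
  show "\<forall>\<^sub>F r in at_right 0. E_sp r W < c"
    using ev_pos by eventually_elim (meson E_upper[OF assms] c le_less_trans less_imp_le)
qed

end
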